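(* There exist a universal constant $c_0>0$ and a universal nonincreasing positive function $R:[0,\infty)\to(0,\infty)$ such that for all bounded measurable functions $f,g:[0,1]\to\mathbb R$, $$\|\mathbb P^n_f-\mathbb P^n_g\|_{TV}\le c_0\sqrt n\,e^{c_0(\|f\|_\infty+\|g\|_\infty)}\|f-g\|_\infty$$ and $$1-\tfrac12\|\mathbb P^n_f-\mathbb P^n_g\|_{TV}\ge R\big(n\,e^{3\|f\|_\infty+3\|g\|_\infty}\|f-g\|_\infty^2\big).$$
   Context: For $n\ge1$ and a bounded measurable $f$ on $[0,1]$, $\mathbb P^n_f$ is the law of $(S_{i/n})_{0\le i\le n}$ where $S_t=S_0+\int_0^t\sigma_u\,dB_u$, $B$ a standard Brownian motion, $S_0$ deterministic, $\sigma_t^2=\exp(f(t))$. For a signed measure $\mu$, $\|\mu\|_{TV}=\sup_{\|h\|_\infty\le1}|\int h\,d\mu|$. *)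

theory Defs
  imports "HOL-Probability.Probability"
begin

definition sup_norm :: "(real \<Rightarrow> real) \<Rightarrow> real" where
  "sup_norm f = (SUP t\<in>{0..1}. \<bar>f t\<bar>)"

text \<open>Variance of the i-th increment S_(i/n) - S_((i-1)/n): integral of sigma^2 = exp f.\<close>
definition incr_var :: "(real \<Rightarrow> real) \<Rightarrow> nat \<Rightarrow> nat \<Rightarrow> real" where
  "incr_var f n i = (LBINT t:{real (i - 1) / real n .. real i / real n}. exp (f t))"

text \<open>Law P^n_f of (S_(i/n)), i = 0..n, on functions {0..n} -> real (extensional),
  S_t = S0 + int_0^t sigma dB with deterministic sigma^2 = exp f: the increments are
  independent centred Gaussians with variances incr_var f n i.\<close>
definition obs_law :: "(real \<Rightarrow> real) \<Rightarrow> real \<Rightarrow> nat \<Rightarrow> (nat \<Rightarrow> real) measure" where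
  "obs_law f S0 n =
     distr (PiM {1..n} (\<lambda>i. density lborel (normal_density 0 (sqrt (incr_var f n i)))))
           (PiM {0..n} (\<lambda>_. borel))
           (\<lambda>x. \<lambda>i\<in>{0..n}. S0 + (\<Sum>j\<in>{1..i}. x j))"

definition tv_norm :: "'a measure \<Rightarrow> 'a measure \<Rightarrow> real" where
  "tv_norm M N = (SUP h\<in>{h. h \<in> borel_measurable M \<and> (\<forall>x\<in>space M. \<bar>h x\<bar> \<le> 1)}.
                    \<bar>(\<integral>x. h x \<partial>M) - (\<integral>x. h x \<partial>N)\<bar>)"

end

theory Submission imports Defs begin

lemma pw_ineq:
  fixes a b t :: real
  assumes "0 \<le> a" "0 \<le> b" "0 < t"
  shows "\<bar>a - b\<bar> \<le> (t + 1/t)/2 * (a + b) + (1/t - t) * sqrt (a * b)"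
proof -
  define x where "x = sqrt a"
  define y where "y = sqrt b"
  have x0: "x \<ge> 0" and y0: "y \<ge> 0" using assms by (auto simp: x_def y_def)
  have a: "a = x^2" and b: "b = y^2" using assms by (auto simp: x_def y_def)
  have s: "sqrt (a*b) = x*y" using assms by (simp add: x_def y_def real_sqrt_mult)
  have "t * \<bar>x^2 - y^2\<bar> \<le> t * ((t + 1/t)/2 * (x^2 + y^2) + (1/t - t) * (x*y))"
  proof -
    have e1: "t * ((t + 1/t)/2 * (x^2 + y^2) + (1/t - t) * (x*y)) = (t^2 * (x-y)^2 + (x+y)^2)/2"
      using assms(3) by (simp add: field_simps power2_eq_square)
    have e2: "\<bar>x^2 - y^2\<bar> = \<bar>x-y\<bar> * (x+y)"
    proof -
      have "x^2 - y^2 = (x-y)*(x+y)" by (simp add: power2_eq_square algebra_simps)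
      thus ?thesis using x0 y0 by (simp add: abs_mult)
    qed
    have "0 \<le> (t*\<bar>x-y\<bar> - (x+y))^2" by simp
    hence "2 * (t*\<bar>x-y\<bar>) * (x+y) \<le> (t*\<bar>x-y\<bar>)^2 + (x+y)^2"
      by (simp add: power2_eq_square algebra_simps)
    hence "t * (\<bar>x-y\<bar> * (x+y)) \<le> (t^2 * (x-y)^2 + (x+y)^2)/2"
      by (simp add: power2_eq_square algebra_simps abs_mult_self_eq)
    thus ?thesis unfolding e1 e2 .
  qed
  hence "\<bar>x^2 - y^2\<bar> \<le> (t + 1/t)/2 * (x^2 + y^2) + (1/t - t) * (x*y)"
    using assms(3) by simp
  thus ?thesis using a b s by simp
qed

lemma tv_core:
  fixes \<mu> :: "'a measure" and p q h :: "'a \<Rightarrow> real"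
  assumes pm[measurable]: "p \<in> borel_measurable \<mu>" and qm[measurable]: "q \<in> borel_measurable \<mu>"
  and p0: "\<And>x. 0 \<le> p x" and q0: "\<And>x. 0 \<le> q x"
  and pi: "(\<integral>\<^sup>+x. ennreal (p x) \<partial>\<mu>) = 1" and qi: "(\<integral>\<^sup>+x. ennreal (q x) \<partial>\<mu>) = 1"
  and ri: "(\<integral>\<^sup>+x. ennreal (sqrt (p x * q x)) \<partial>\<mu>) = ennreal \<rho>" and \<rho>0: "0 \<le> \<rho>"
  and hm[measurable]: "h \<in> borel_measurable \<mu>" and hb: "\<And>x. x \<in> space \<mu> \<Longrightarrow> \<bar>h x\<bar> \<le> 1"
  and t: "t > 0"
  shows "\<bar>(\<integral>x. h x \<partial>density \<mu> p) - (\<integral>x. h x \<partial>density \<mu> q)\<bar> \<le> t*(1-\<rho>) + (1+\<rho>)/t"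
proof -
  have ip: "integrable \<mu> p" using integrableI_nn_integral_finite[OF pm _ pi[unfolded ennreal_1[symmetric]]] p0 by auto
  have iq: "integrable \<mu> q" using integrableI_nn_integral_finite[OF qm _ qi[unfolded ennreal_1[symmetric]]] q0 by auto
  have ir: "integrable \<mu> (\<lambda>x. sqrt (p x * q x))" using integrableI_nn_integral_finite[OF _ _ ri] p0 q0 by auto
  have Ip: "(\<integral>x. p x \<partial>\<mu>) = 1" using integral_eq_nn_integral[of p \<mu>] pi p0 by simp
  have Iq: "(\<integral>x. q x \<partial>\<mu>) = 1" using integral_eq_nn_integral[of q \<mu>] qi q0 by simp
  have Ir: "(\<integral>x. sqrt (p x * q x) \<partial>\<mu>) = \<rho>" using integral_eq_nn_integral[of "\<lambda>x. sqrt (p x * q x)" \<mu>] ri p0 q0 \<rho>0 by simp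
  have iph: "integrable \<mu> (\<lambda>x. p x * h x)"
    by (rule Bochner_Integration.integrable_bound[OF ip]) (auto intro!: AE_I2 simp: abs_mult p0 intro: mult_left_le[OF hb])
  have iqh: "integrable \<mu> (\<lambda>x. q x * h x)"
    by (rule Bochner_Integration.integrable_bound[OF iq]) (auto intro!: AE_I2 simp: abs_mult q0 intro: mult_left_le[OF hb])
  have d1: "(\<integral>x. h x \<partial>density \<mu> p) = (\<integral>x. p x * h x \<partial>\<mu>)"
    by (subst integral_density) (auto simp: p0)
  have d2: "(\<integral>x. h x \<partial>density \<mu> q) = (\<integral>x. q x * h x \<partial>\<mu>)"
    by (subst integral_density) (auto simp: q0)
  define c1 where "c1 = (t + 1/t)/2"
  define c2 where "c2 = 1/t - t"
  have "\<bar>(\<integral>x. p x * h x \<partial>\<mu>) - (\<integral>x. q x * h x \<partial>\<mu>)\<bar> = \<bar>\<integral>x. p x * h x - q x * h x \<partial>\<mu>\<bar>"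
    using iph iqh by simp
  also have "\<dots> \<le> (\<integral>x. c1 * (p x + q x) + c2 * sqrt (p x * q x) \<partial>\<mu>)"
  proof -
    have i1: "integrable \<mu> (\<lambda>x. p x * h x - q x * h x)" using iph iqh by simp
    have i2: "integrable \<mu> (\<lambda>x. c1 * (p x + q x) + c2 * sqrt (p x * q x))" using ip iq ir by simp
    have pw: "\<bar>p x * h x - q x * h x\<bar> \<le> c1 * (p x + q x) + c2 * sqrt (p x * q x)" if x: "x \<in> space \<mu>" for x
    proof -
      have "\<bar>p x * h x - q x * h x\<bar> = \<bar>p x - q x\<bar> * \<bar>h x\<bar>" by (simp add: abs_mult left_diff_distrib[symmetric])
      also have "\<dots> \<le> \<bar>p x - q x\<bar>" using hb[OF x] by (simp add: mult_left_le)
      also have "\<dots> \<le> c1 * (p x + q x) + c2 * sqrt (p x * q x)" unfolding c1_def c2_def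
        by (rule pw_ineq[OF p0 q0 t])
      finally show ?thesis .
    qed
    have "\<bar>\<integral>x. p x * h x - q x * h x \<partial>\<mu>\<bar> \<le> (\<integral>x. \<bar>p x * h x - q x * h x\<bar> \<partial>\<mu>)"
      using integral_norm_bound[of \<mu> "\<lambda>x. p x * h x - q x * h x"] by simp
    also have "\<dots> \<le> (\<integral>x. c1 * (p x + q x) + c2 * sqrt (p x * q x) \<partial>\<mu>)"
      by (rule integral_mono[OF _ i2 pw]) (use i1 in auto)
    finally show ?thesis .
  qed
  also have "\<dots> = c1 * 2 + c2 * \<rho>" using ip iq ir Ip Iq Ir by simp
  also have "\<dots> = t*(1-\<rho>) + (1+\<rho>)/t" unfolding c1_def c2_def using t by (simp add: field_simps)
  finally show ?thesis using d1 d2 by simp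
qed

lemma tv_opt:
  fixes X \<rho> :: real
  assumes "0 \<le> \<rho>" "\<rho> \<le> 1" and H: "\<And>t. t > 0 \<Longrightarrow> X \<le> t*(1-\<rho>) + (1+\<rho>)/t"
  shows "X \<le> 2 * sqrt (1 - \<rho>^2)"
proof (cases "\<rho> < 1")
  case True
  define u where "u = sqrt (1-\<rho>)"
  define w where "w = sqrt (1+\<rho>)"
  have u0: "u > 0" using True by (simp add: u_def)
  have w0: "w > 0" using assms by (simp add: w_def)
  have uu: "u^2 = 1-\<rho>" using True by (simp add: u_def)
  have ww: "w^2 = 1+\<rho>" using assms by (simp add: w_def)
  have "X \<le> (w/u)*(1-\<rho>) + (1+\<rho>)/(w/u)" using H[of "w/u"] u0 w0 by simp
  also have "\<dots> = (w/u)*u^2 + w^2/(w/u)" by (simp only: uu ww)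
  also have "\<dots> = 2*(u*w)"
  proof -
    have a: "(w/u)*u^2 = u*w" using u0 by (simp add: power2_eq_square)
    have b: "w^2/(w/u) = u*w" using u0 w0 by (simp add: power2_eq_square)
    show ?thesis unfolding a b by simp
  qed
  also have "u*w = sqrt (1 - \<rho>^2)"
  proof -
    have "u*w = sqrt ((1-\<rho>)*(1+\<rho>))" unfolding u_def w_def by (rule real_sqrt_mult[symmetric])
    also have "(1-\<rho>)*(1+\<rho>) = 1 - \<rho>^2" by (simp add: power2_eq_square algebra_simps)
    finally show ?thesis .
  qed
  finally show ?thesis by simp
next
  case False
  hence r: "\<rho> = 1" using assms by simp
  have "X \<le> 0"
  proof (rule ccontr)
    assume "\<not> X \<le> 0"
    hence "X > 0" by simp
    with H[of "4/X"] r show False by (simp add: field_simps)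
  qed
  thus ?thesis using r by simp
qed

lemma mem_ne: "x \<in> A \<Longrightarrow> A \<noteq> {}" by auto

lemma tv_distr:
  fixes \<mu> :: "'a measure" and p q :: "'a \<Rightarrow> real" and T :: "'a \<Rightarrow> 'b"
  assumes pm[measurable]: "p \<in> borel_measurable \<mu>" and qm[measurable]: "q \<in> borel_measurable \<mu>"
  and p0: "\<And>x. 0 \<le> p x" and q0: "\<And>x. 0 \<le> q x"
  and pi: "(\<integral>\<^sup>+x. ennreal (p x) \<partial>\<mu>) = 1" and qi: "(\<integral>\<^sup>+x. ennreal (q x) \<partial>\<mu>) = 1"
  and ri: "(\<integral>\<^sup>+x. ennreal (sqrt (p x * q x)) \<partial>\<mu>) = ennreal \<rho>" and \<rho>0: "0 \<le> \<rho>" and \<rho>1: "\<rho> \<le> 1"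
  and Tm[measurable]: "T \<in> measurable \<mu> N"
  shows "tv_norm (distr (density \<mu> p) N T) (distr (density \<mu> q) N T) \<le> 2 * sqrt (1 - \<rho>^2)"
  unfolding tv_norm_def
proof (rule cSUP_least)
  show "{h. h \<in> borel_measurable (distr (density \<mu> p) N T) \<and> (\<forall>x\<in>space (distr (density \<mu> p) N T). \<bar>h x::real\<bar> \<le> 1)} \<noteq> {}"
    proof -
    have "(\<lambda>_. 0::real) \<in> {h. h \<in> borel_measurable (distr (density \<mu> p) N T) \<and> (\<forall>x\<in>space (distr (density \<mu> p) N T). \<bar>h x::real\<bar> \<le> 1)}" by (intro CollectI conjI ballI borel_measurable_const) auto
    thus ?thesis by (rule mem_ne)
  qed
  fix h assume "h \<in> {h. h \<in> borel_measurable (distr (density \<mu> p) N T) \<and> (\<forall>x\<in>space (distr (density \<mu> p) N T). \<bar>h x::real\<bar> \<le> 1)}"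
  hence hm[measurable]: "h \<in> borel_measurable N" and hb: "\<And>x. x \<in> space N \<Longrightarrow> \<bar>h x\<bar> \<le> 1" by auto
  have e1: "(\<integral>x. h x \<partial>distr (density \<mu> p) N T) = (\<integral>x. h (T x) \<partial>density \<mu> p)"
    by (rule integral_distr) simp_all
  have e2: "(\<integral>x. h x \<partial>distr (density \<mu> q) N T) = (\<integral>x. h (T x) \<partial>density \<mu> q)"
    by (rule integral_distr) simp_all
  have hb': "\<And>x. x \<in> space \<mu> \<Longrightarrow> \<bar>h (T x)\<bar> \<le> 1" using hb measurable_space[OF Tm] by blast
  show "\<bar>(\<integral>x. h x \<partial>distr (density \<mu> p) N T) - (\<integral>x. h x \<partial>distr (density \<mu> q) N T)\<bar> \<le> 2 * sqrt (1 - \<rho>^2)"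
    unfolding e1 e2
    by (rule tv_opt[OF \<rho>0 \<rho>1 tv_core[OF pm qm p0 q0 pi qi ri \<rho>0 _ hb']]) simp_all
qed


lemma sqrt_prod: "finite I \<Longrightarrow> sqrt (\<Prod>i\<in>I. f i) = (\<Prod>i\<in>I. sqrt (f i))"
  by (induction I rule: finite_induct) (auto simp: real_sqrt_mult)

lemma psf_lborel: "product_sigma_finite (\<lambda>_. lborel :: real measure)"
  by (simp add: product_sigma_finite_def) (rule lborel.sigma_finite_measure_axioms)

lemma nn_prod_lborel:
  fixes g :: "'i \<Rightarrow> real \<Rightarrow> real"
  assumes "finite I" "\<And>i. g i \<in> borel_measurable borel" "\<And>i x. 0 \<le> g i x"
  shows "(\<integral>\<^sup>+x. ennreal (\<Prod>i\<in>I. g i (x i)) \<partial>PiM I (\<lambda>_. lborel)) = (\<Prod>i\<in>I. \<integral>\<^sup>+y. ennreal (g i y) \<partial>lborel)"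
proof -
  interpret product_sigma_finite "\<lambda>_. lborel :: real measure" by (rule psf_lborel)
  have "(\<integral>\<^sup>+x. ennreal (\<Prod>i\<in>I. g i (x i)) \<partial>PiM I (\<lambda>_. lborel)) = (\<integral>\<^sup>+x. (\<Prod>i\<in>I. ennreal (g i (x i))) \<partial>PiM I (\<lambda>_. lborel))"
    using assms(3) by (simp add: prod_ennreal)
  also have "\<dots> = (\<Prod>i\<in>I. \<integral>\<^sup>+y. ennreal (g i y) \<partial>lborel)"
    by (rule product_nn_integral_prod[OF assms(1)]) (use assms(2) in simp)
  finally show ?thesis .
qed

lemma PiM_density_prod:
  fixes p :: "'i \<Rightarrow> real \<Rightarrow> real"
  assumes fin: "finite I" and pm: "\<And>i. p i \<in> borel_measurable borel" and p0: "\<And>i x. 0 \<le> p i x"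
    and ps: "\<And>i. prob_space (density lborel (p i))"
  shows "PiM I (\<lambda>i. density lborel (p i)) = density (PiM I (\<lambda>_. lborel)) (\<lambda>x. \<Prod>i\<in>I. p i (x i))"
proof -
  interpret L: product_sigma_finite "\<lambda>_. lborel :: real measure" by (rule psf_lborel)
  interpret D: product_sigma_finite "\<lambda>i. density lborel (p i)"
    unfolding product_sigma_finite_def
  proof
    fix i show "sigma_finite_measure (density lborel (p i))"
      by (rule prob_space_imp_sigma_finite[OF ps[of i]])
  qed
  have pm': "\<And>i. p i \<in> borel_measurable lborel" using pm by simp
  have "density (PiM I (\<lambda>_. lborel)) (\<lambda>x. \<Prod>i\<in>I. p i (x i)) = PiM I (\<lambda>i. density lborel (p i))"
  proof (rule D.PiM_eqI[OF fin])
    show "sets (density (PiM I (\<lambda>_. lborel)) (\<lambda>x. \<Prod>i\<in>I. p i (x i))) = sets (PiM I (\<lambda>i. density lborel (p i)))"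
      unfolding sets_density by (rule sets_PiM_cong) simp_all
    fix A assume A: "\<And>i. i \<in> I \<Longrightarrow> A i \<in> sets (density lborel (p i))"
    hence Ab: "\<And>i. i \<in> I \<Longrightarrow> A i \<in> sets borel" by simp
    have PA: "PiE I A \<in> sets (PiM I (\<lambda>_. lborel))"
      by (rule sets_PiM_I_finite[OF fin]) (use Ab in simp)
    have meas: "(\<lambda>x. \<Prod>i\<in>I. p i (x i)) \<in> borel_measurable (PiM I (\<lambda>_. lborel))"
      using pm' by (intro borel_measurable_prod) (auto intro: measurable_compose[OF measurable_component_singleton])
    have "emeasure (density (PiM I (\<lambda>_. lborel)) (\<lambda>x. \<Prod>i\<in>I. p i (x i))) (PiE I A)
        = (\<integral>\<^sup>+x. ennreal (\<Prod>i\<in>I. p i (x i)) * indicator (PiE I A) x \<partial>PiM I (\<lambda>_. lborel))"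
      by (rule emeasure_density[OF _ PA]) (use meas in simp)
    also have "\<dots> = (\<integral>\<^sup>+x. (\<Prod>i\<in>I. ennreal (p i (x i)) * indicator (A i) (x i)) \<partial>PiM I (\<lambda>_. lborel))"
    proof (rule nn_integral_cong)
      fix x :: "'i \<Rightarrow> real" assume x: "x \<in> space (PiM I (\<lambda>_. lborel))"
      show "ennreal (\<Prod>i\<in>I. p i (x i)) * indicator (PiE I A) x = (\<Prod>i\<in>I. ennreal (p i (x i)) * indicator (A i) (x i))"
      proof (cases "\<forall>i\<in>I. x i \<in> A i")
        case True
        hence "x \<in> PiE I A" using x by (auto simp: space_PiM PiE_def)
        thus ?thesis using True p0 by (simp add: prod_ennreal)
      next
        case False
        then obtain i where i: "i \<in> I" "x i \<notin> A i" by blast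
        hence "x \<notin> PiE I A" by auto
        moreover have "(\<Prod>i\<in>I. ennreal (p i (x i)) * indicator (A i) (x i)) = 0"
          using i fin by (intro prod_zero) (auto intro!: bexI[of _ i])
        ultimately show ?thesis by simp
      qed
    qed
    also have "\<dots> = (\<Prod>i\<in>I. \<integral>\<^sup>+y. ennreal (p i y) * indicator (A i) y \<partial>lborel)"
      by (rule L.product_nn_integral_prod[OF fin]) (use pm' Ab in auto)
    also have "\<dots> = (\<Prod>i\<in>I. emeasure (density lborel (p i)) (A i))"
      by (rule prod.cong[OF refl], rule emeasure_density[symmetric]) (use pm' Ab in auto)
    finally show "emeasure (density (PiM I (\<lambda>_. lborel)) (\<lambda>x. \<Prod>i\<in>I. p i (x i))) (PiE I A) = (\<Prod>i\<in>I. emeasure (density lborel (p i)) (A i))" .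
  qed
  thus ?thesis by simp
qed


lemma nd_alt: "\<sigma> > 0 \<Longrightarrow> normal_density 0 \<sigma> x = exp (- (x^2)/(2*\<sigma>^2)) / (sqrt (2*pi) * \<sigma>)"
  by (simp add: normal_density_def real_sqrt_mult)

lemma gauss_pw:
  fixes \<sigma> \<tau> x :: real
  assumes s: "\<sigma> > 0" and t: "\<tau> > 0"
  defines "r \<equiv> sqrt (2*\<sigma>^2*\<tau>^2/(\<sigma>^2+\<tau>^2))"
  shows "sqrt (normal_density 0 \<sigma> x * normal_density 0 \<tau> x) = sqrt (2*\<sigma>*\<tau>/(\<sigma>^2+\<tau>^2)) * normal_density 0 r x"
proof -
  have r0: "r > 0" using s t by (auto simp: r_def intro!: divide_pos_pos add_pos_pos)
  have rr: "r^2 = 2*\<sigma>^2*\<tau>^2/(\<sigma>^2+\<tau>^2)" using s t by (simp add: r_def)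
  have cc: "(sqrt (2*\<sigma>*\<tau>/(\<sigma>^2+\<tau>^2)))^2 = 2*\<sigma>*\<tau>/(\<sigma>^2+\<tau>^2)" using s t by simp
  have ex: "- (x^2)/(2*\<sigma>^2) + - (x^2)/(2*\<tau>^2) = 2 * (- (x^2)/(2*r^2))"
    unfolding rr using s t by (simp add: field_simps power2_eq_square)
  have "(sqrt (2*\<sigma>*\<tau>/(\<sigma>^2+\<tau>^2)) * normal_density 0 r x)^2
      = (2*\<sigma>*\<tau>/(\<sigma>^2+\<tau>^2)) * (exp (- (x^2)/(2*r^2)))^2 / (2*pi*r^2)"
    unfolding nd_alt[OF r0] power_mult_distrib cc by (simp add: power_divide power_mult_distrib)
  also have "\<dots> = (2*\<sigma>*\<tau>/(\<sigma>^2+\<tau>^2)) / (2*pi*r^2) * exp (- (x^2)/(2*\<sigma>^2) + - (x^2)/(2*\<tau>^2))"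
  proof -
    have "(exp (- (x^2)/(2*r^2)))^2 = exp (- (x^2)/(2*\<sigma>^2) + - (x^2)/(2*\<tau>^2))"
    proof -
      have "exp (- (x^2)/(2*\<sigma>^2) + - (x^2)/(2*\<tau>^2)) = exp (2 * (- (x^2)/(2*r^2)))" by (simp only: ex)
      also have "\<dots> = (exp (- (x^2)/(2*r^2)))^2" by (simp only: mult_2 exp_add power2_eq_square)
      finally show ?thesis by simp
    qed
    thus ?thesis by simp
  qed
  also have "(2*\<sigma>*\<tau>/(\<sigma>^2+\<tau>^2)) / (2*pi*r^2) = 1/(sqrt(2*pi)*\<sigma> * (sqrt(2*pi)*\<tau>))"
  proof -
    have S: "\<sigma>^2+\<tau>^2 > 0" using s t by (simp add: add_pos_pos)
    have q: "sqrt(2*pi)*\<sigma> * (sqrt(2*pi)*\<tau>) = 2*pi*\<sigma>*\<tau>" by (simp add: power2_eq_square[symmetric])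
    have "(2*\<sigma>*\<tau>/(\<sigma>^2+\<tau>^2)) / (2*pi*r^2) = (2*\<sigma>*\<tau>/(\<sigma>^2+\<tau>^2)) / (4*pi*\<sigma>^2*\<tau>^2/(\<sigma>^2+\<tau>^2))"
      unfolding rr by simp
    also have "\<dots> = (2*\<sigma>*\<tau>) / (4*pi*\<sigma>^2*\<tau>^2)" using S by (simp add: divide_simps)
    also have "\<dots> = 1/(2*pi*\<sigma>*\<tau>)" using s t by (simp add: power2_eq_square)
    finally show ?thesis unfolding q .
  qed
  also have "1/(sqrt(2*pi)*\<sigma> * (sqrt(2*pi)*\<tau>)) * exp (- (x^2)/(2*\<sigma>^2) + - (x^2)/(2*\<tau>^2))
      = normal_density 0 \<sigma> x * normal_density 0 \<tau> x"
    unfolding nd_alt[OF s] nd_alt[OF t] exp_add by simp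
  finally have "(sqrt (2*\<sigma>*\<tau>/(\<sigma>^2+\<tau>^2)) * normal_density 0 r x)^2 = normal_density 0 \<sigma> x * normal_density 0 \<tau> x" .
  moreover have "0 \<le> sqrt (2*\<sigma>*\<tau>/(\<sigma>^2+\<tau>^2)) * normal_density 0 r x" using s t by simp
  ultimately show ?thesis by (metis real_sqrt_abs abs_of_nonneg)
qed

lemma gauss_aff:
  fixes \<sigma> \<tau> :: real
  assumes s: "\<sigma> > 0" and t: "\<tau> > 0"
  shows "(\<integral>\<^sup>+x. ennreal (sqrt (normal_density 0 \<sigma> x * normal_density 0 \<tau> x)) \<partial>lborel) = ennreal (sqrt (2*\<sigma>*\<tau>/(\<sigma>^2+\<tau>^2)))"
proof -
  define r where "r = sqrt (2*\<sigma>^2*\<tau>^2/(\<sigma>^2+\<tau>^2))"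
  define c where "c = sqrt (2*\<sigma>*\<tau>/(\<sigma>^2+\<tau>^2))"
  have c0: "c \<ge> 0" using s t by (simp add: c_def)
  have r0: "r > 0" using s t by (auto simp: r_def intro!: divide_pos_pos add_pos_pos)
  have "(\<integral>\<^sup>+x. ennreal (sqrt (normal_density 0 \<sigma> x * normal_density 0 \<tau> x)) \<partial>lborel)
      = (\<integral>\<^sup>+x. ennreal c * ennreal (normal_density 0 r x) \<partial>lborel)"
    using gauss_pw[OF s t] c0 by (simp add: r_def c_def ennreal_mult)
  also have "\<dots> = ennreal c * (\<integral>\<^sup>+x. ennreal (normal_density 0 r x) \<partial>lborel)"
    by (rule nn_integral_cmult) simp
  also have "(\<integral>\<^sup>+x. ennreal (normal_density 0 r x) \<partial>lborel) = 1"
    using r0 by (subst nn_integral_eq_integral) (auto intro: integrable_normal_density)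
  finally show ?thesis by (simp add: c_def)
qed


lemma kappa_core:
  fixes y \<delta> :: real
  assumes s1: "1 \<le> y" and ss: "y^2 \<le> exp \<delta>" and d0: "0 \<le> \<delta>"
  shows "(1+y^2)/(2*y) \<le> exp (\<delta>^2/2)"
proof -
  have s0: "y > 0" using s1 by simp
  have se: "y \<le> exp (\<delta>/2)"
  proof -
    have "exp \<delta> = (exp (\<delta>/2))^2" by (simp add: power2_eq_square exp_add[symmetric])
    hence "y^2 \<le> (exp (\<delta>/2))^2" using ss by simp
    thus ?thesis using s0 by (simp add: power_mono_iff[symmetric] abs_le_square_iff)
  qed
  show ?thesis
  proof (cases "\<delta> \<ge> 1")
    case True
    have yy: "1 \<le> y*y" using s1 mult_mono[of 1 y 1 y] by simp
    have "(1+y^2)/(2*y) \<le> y" using s0 yy by (simp add: divide_simps power2_eq_square)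
    also have "\<dots> \<le> exp (\<delta>/2)" by (rule se)
    also have "\<dots> \<le> exp (\<delta>^2/2)"
    proof -
      have "\<delta> \<le> \<delta>*\<delta>" using True mult_left_mono[of 1 \<delta> \<delta>] by simp
      thus ?thesis by (simp add: power2_eq_square)
    qed
    finally show ?thesis .
  next
    case False
    have "exp (\<delta>/2) \<le> 1 + \<delta>/2 + (\<delta>/2)^2" by (rule exp_bound) (use d0 False in auto)
    also have "\<dots> \<le> 1 + \<delta>"
    proof -
      have "\<delta>*\<delta> \<le> \<delta>" using d0 False mult_left_mono[of \<delta> 1 \<delta>] by simp
      thus ?thesis using d0 by (simp add: power2_eq_square)
    qed
    finally have sd: "y - 1 \<le> \<delta>" using se by simp
    have "(1+y^2)/(2*y) = 1 + (y-1)^2/(2*y)" using s0 by (simp add: field_simps power2_eq_square)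
    also have "(y-1)^2/(2*y) \<le> \<delta>^2/2"
    proof -
      have "(y-1)^2 \<le> \<delta>^2" using sd s1 by (simp add: power_mono)
      moreover have "(y-1)^2/(2*y) \<le> (y-1)^2/2" by (rule divide_left_mono) (use s1 in auto)
      ultimately show ?thesis by simp
    qed
    also have "1 + \<delta>^2/2 \<le> exp (\<delta>^2/2)" by (rule exp_ge_add_one_self)
    finally show ?thesis by simp
  qed
qed

lemma kappa_bound:
  fixes \<sigma> \<tau> \<delta> :: real
  assumes s: "\<sigma> > 0" and t: "\<tau> > 0" and d0: "0 \<le> \<delta>"
    and h1: "\<tau>^2 \<le> exp \<delta> * \<sigma>^2" and h2: "\<sigma>^2 \<le> exp \<delta> * \<tau>^2"
  shows "exp (-(\<delta>^2/2)) \<le> 2*\<sigma>*\<tau>/(\<sigma>^2+\<tau>^2)" and "2*\<sigma>*\<tau>/(\<sigma>^2+\<tau>^2) \<le> 1"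
proof -
  have S: "\<sigma>^2+\<tau>^2 > 0" using s t by (simp add: add_pos_pos)
  show "2*\<sigma>*\<tau>/(\<sigma>^2+\<tau>^2) \<le> 1" using S
    by (simp add: divide_simps) (smt (verit) sum_squares_bound)
  have key: "(\<sigma>^2+\<tau>^2)/(2*\<sigma>*\<tau>) \<le> exp (\<delta>^2/2)"
  proof (cases "\<sigma> \<le> \<tau>")
    case True
    have "(1+(\<tau>/\<sigma>)^2)/(2*(\<tau>/\<sigma>)) \<le> exp (\<delta>^2/2)"
      by (rule kappa_core) (use True s h1 d0 in \<open>auto simp: power_divide divide_simps mult.commute\<close>)
    moreover have "(1+(\<tau>/\<sigma>)^2)/(2*(\<tau>/\<sigma>)) = (\<sigma>^2+\<tau>^2)/(2*\<sigma>*\<tau>)"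
      using s t by (simp add: field_simps power2_eq_square)
    ultimately show ?thesis by simp
  next
    case False
    have "(1+(\<sigma>/\<tau>)^2)/(2*(\<sigma>/\<tau>)) \<le> exp (\<delta>^2/2)"
      by (rule kappa_core) (use False t h2 d0 in \<open>auto simp: power_divide divide_simps mult.commute\<close>)
    moreover have "(1+(\<sigma>/\<tau>)^2)/(2*(\<sigma>/\<tau>)) = (\<sigma>^2+\<tau>^2)/(2*\<sigma>*\<tau>)"
      using s t by (simp add: field_simps power2_eq_square)
    ultimately show ?thesis by simp
  qed
  have p: "(\<sigma>^2+\<tau>^2)/(2*\<sigma>*\<tau>) > 0" using S s t by simp
  have "2*\<sigma>*\<tau>/(\<sigma>^2+\<tau>^2) = inverse ((\<sigma>^2+\<tau>^2)/(2*\<sigma>*\<tau>))" by simp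
  also have "\<dots> \<ge> inverse (exp (\<delta>^2/2))" using key p by (rule le_imp_inverse_le)
  finally show "exp (-(\<delta>^2/2)) \<le> 2*\<sigma>*\<tau>/(\<sigma>^2+\<tau>^2)" by (simp add: exp_minus)
qed

lemma sn_ge:
  fixes f :: "real \<Rightarrow> real"
  assumes b: "bounded (f ` {0..1})" and t: "t \<in> {0..1}"
  shows "\<bar>f t\<bar> \<le> sup_norm f"
proof -
  obtain a where a: "\<forall>x\<in>f ` {0..1}. norm x \<le> a" using b unfolding bounded_iff by blast
  have "bdd_above ((\<lambda>t. \<bar>f t\<bar>) ` {0..1})" using a by (auto intro!: bdd_aboveI[of _ a])
  thus ?thesis unfolding sup_norm_def by (rule cSUP_upper[OF t])
qed

lemma sn_nonneg: "bounded ((f::real\<Rightarrow>real) ` {0..1}) \<Longrightarrow> 0 \<le> sup_norm f"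
  using sn_ge[of f 0] by (meson abs_ge_zero atLeastAtMost_iff order_trans zero_le_one order_refl)
lemma bounded_diff01:
  fixes f g :: "real \<Rightarrow> real"
  assumes "bounded (f ` {0..1})" "bounded (g ` {0..1})"
  shows "bounded ((\<lambda>t. f t - g t) ` {0..1})"
proof -
  obtain a where a: "\<forall>x\<in>f ` {0..1}. norm x \<le> a" using assms(1) unfolding bounded_iff by blast
  obtain b where b: "\<forall>x\<in>g ` {0..1}. norm x \<le> b" using assms(2) unfolding bounded_iff by blast
  have "\<forall>x\<in>(\<lambda>t. f t - g t) ` {0..1}. norm x \<le> a + b"
  proof
    fix x assume "x \<in> (\<lambda>t. f t - g t) ` {0..1}"
    then obtain t where t: "t \<in> {0..1}" "x = f t - g t" by blast
    have "\<bar>f t\<bar> \<le> a" "\<bar>g t\<bar> \<le> b" using a b t by auto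
    thus "norm x \<le> a + b" using t by simp
  qed
  thus ?thesis unfolding bounded_iff by blast
qed

lemma iv_interval:
  assumes n: "n \<ge> 1" and i: "i \<in> {1..n}"
  shows "0 \<le> real (i - 1) / real n" "real (i - 1) / real n < real i / real n" "real i / real n \<le> 1"
    "{real (i - 1) / real n .. real i / real n} \<subseteq> {0..1}"
    "measure lborel {real (i - 1) / real n .. real i / real n} = 1 / real n"
proof -
  have i1: "real (i - 1) = real i - 1" using i by (simp add: of_nat_diff)
  have np: "real n > 0" using n by simp
  have "real i \<le> real n" using i by simp
  thus c: "real i / real n \<le> 1" using np by simp
  show a: "0 \<le> real (i - 1) / real n" by simp
  show b: "real (i - 1) / real n < real i / real n" using np i1 by (simp add: divide_strict_right_mono)
  show "{real (i - 1) / real n .. real i / real n} \<subseteq> {0..1}" using a c by auto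
  show "measure lborel {real (i - 1) / real n .. real i / real n} = 1 / real n"
    using b np i1 by (simp add: diff_divide_distrib)
qed

lemma iv_integrable:
  fixes f :: "real \<Rightarrow> real" and F :: real
  assumes n: "n \<ge> 1" and i: "i \<in> {1..n}" and fm: "f \<in> borel_measurable borel"
    and fb: "\<And>t. t \<in> {0..1} \<Longrightarrow> \<bar>f t\<bar> \<le> F"
  shows "set_integrable lborel {real (i - 1) / real n .. real i / real n} (\<lambda>t. exp (f t))"
  unfolding set_integrable_def
proof (rule integrableI_bounded_set_indicator[where B="exp F"])
  show "(\<lambda>t. exp (f t)) \<in> borel_measurable lborel" using fm by simp
  show "AE x in lborel. x \<in> {real (i - 1) / real n .. real i / real n} \<longrightarrow> norm (exp (f x)) \<le> exp F"
  proof (rule AE_I2, rule impI)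
    fix x assume "x \<in> {real (i - 1) / real n .. real i / real n}"
    hence "x \<in> {0..1}" using iv_interval(4)[OF n i] by blast
    thus "norm (exp (f x)) \<le> exp F" using fb[of x] by simp
  qed
qed (simp_all add: emeasure_lborel_Icc_eq)

lemma const_integrable:
  "set_integrable lborel {a..b::real} (\<lambda>t. c::real)"
  unfolding set_integrable_def
  by (rule integrableI_bounded_set_indicator[where B="\<bar>c\<bar>"]) (simp_all add: emeasure_lborel_Icc_eq)

lemma iv_pos:
  fixes f :: "real \<Rightarrow> real" and F :: real
  assumes n: "n \<ge> 1" and i: "i \<in> {1..n}" and fm: "f \<in> borel_measurable borel"
    and fb: "\<And>t. t \<in> {0..1} \<Longrightarrow> \<bar>f t\<bar> \<le> F"
  shows "0 < incr_var f n i"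
proof -
  let ?A = "{real (i - 1) / real n .. real i / real n}"
  have "(LINT t:?A|lborel. exp (-F)) \<le> (LINT t:?A|lborel. exp (f t))"
  proof (rule set_integral_mono[OF const_integrable iv_integrable[OF n i fm fb]])
    fix t assume "t \<in> ?A"
    hence "t \<in> {0..1}" using iv_interval(4)[OF n i] by blast
    thus "exp (-F) \<le> exp (f t)" using fb[of t] by simp
  qed
  moreover have "(LINT t:?A|lborel. exp (-F)) = measure lborel ?A *\<^sub>R exp (-F)"
    by (rule set_integral_const) (simp_all add: emeasure_lborel_Icc_eq)
  moreover have "measure lborel ?A = 1 / real n" by (rule iv_interval(5)[OF n i])
  moreover have "1 / real n * exp (-F) > 0" using n by simp
  ultimately show ?thesis unfolding incr_var_def by (metis real_scaleR_def order_less_le_trans)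
qed

lemma iv_le:
  assumes n: "n \<ge> 1" and i: "i \<in> {1..n}" and fm: "f \<in> borel_measurable borel" and gm: "g \<in> borel_measurable borel"
    and fb: "\<And>t. t \<in> {0..1} \<Longrightarrow> \<bar>f t\<bar> \<le> F" and gb: "\<And>t. t \<in> {0..1} \<Longrightarrow> \<bar>g t\<bar> \<le> G"
    and db: "\<And>t. t \<in> {0..1} \<Longrightarrow> \<bar>f t - g t\<bar> \<le> \<delta>"
  shows "incr_var g n i \<le> exp \<delta> * incr_var f n i"
proof -
  let ?A = "{real (i - 1) / real n .. real i / real n}"
  have "(LINT t:?A|lborel. exp (g t)) \<le> (LINT t:?A|lborel. exp \<delta> * exp (f t))"
  proof (rule set_integral_mono[OF iv_integrable[OF n i gm gb]])
    show "set_integrable lborel ?A (\<lambda>t. exp \<delta> * exp (f t))"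
      using iv_integrable[OF n i fm fb] by (rule set_integrable_mult_right)
    fix t assume "t \<in> ?A"
    hence "t \<in> {0..1}" using iv_interval(4)[OF n i] by blast
    hence "g t \<le> \<delta> + f t" using db[of t] by simp
    thus "exp (g t) \<le> exp \<delta> * exp (f t)" by (simp add: exp_add[symmetric])
  qed
  thus ?thesis unfolding incr_var_def by simp
qed
lemma nd_nn1: "\<sigma> > 0 \<Longrightarrow> (\<integral>\<^sup>+x. ennreal (normal_density 0 \<sigma> x) \<partial>lborel) = 1"
  by (subst nn_integral_eq_integral) (auto intro: integrable_normal_density)

lemma main_rho:
  fixes f g :: "real \<Rightarrow> real" and n :: nat and S0 :: real
  assumes n: "n \<ge> 1" and fm: "f \<in> borel_measurable borel" and gm: "g \<in> borel_measurable borel"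
    and fbd: "bounded (f ` {0..1})" and gbd: "bounded (g ` {0..1})"
  shows "\<exists>\<rho>. 0 \<le> \<rho> \<and> \<rho> \<le> 1 \<and> exp (-(real n * (sup_norm (\<lambda>t. f t - g t))^2/2)) \<le> \<rho>^2 \<and>
           tv_norm (obs_law f S0 n) (obs_law g S0 n) \<le> 2 * sqrt (1 - \<rho>^2)"
proof -
  define I where "I = {1..n}"
  define \<delta> where "\<delta> = sup_norm (\<lambda>t. f t - g t)"
  have fin: "finite I" by (simp add: I_def)
  have cardI: "card I = n" by (simp add: I_def)
  have fb: "\<And>t. t \<in> {0..1} \<Longrightarrow> \<bar>f t\<bar> \<le> sup_norm f" using sn_ge[OF fbd] .
  have gb: "\<And>t. t \<in> {0..1} \<Longrightarrow> \<bar>g t\<bar> \<le> sup_norm g" using sn_ge[OF gbd] .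
  have db: "\<And>t. t \<in> {0..1} \<Longrightarrow> \<bar>f t - g t\<bar> \<le> \<delta>" unfolding \<delta>_def using sn_ge[OF bounded_diff01[OF fbd gbd]] .
  have db': "\<And>t. t \<in> {0..1} \<Longrightarrow> \<bar>g t - f t\<bar> \<le> \<delta>" using db by (simp add: abs_minus_commute)
  have d0: "0 \<le> \<delta>" using db[of 0] by simp
  define vf where "vf i = (if i \<in> I then incr_var f n i else 1)" for i
  define vg where "vg i = (if i \<in> I then incr_var g n i else 1)" for i
  have vf0: "vf i > 0" for i using iv_pos[OF n _ fm fb] by (auto simp: vf_def I_def)
  have vg0: "vg i > 0" for i using iv_pos[OF n _ gm gb] by (auto simp: vg_def I_def)
  define sf where "sf i = sqrt (vf i)" for i
  define sg where "sg i = sqrt (vg i)" for i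
  have sf0: "sf i > 0" for i using vf0[of i] by (simp add: sf_def)
  have sg0: "sg i > 0" for i using vg0[of i] by (simp add: sg_def)
  define p where "p i = normal_density 0 (sf i)" for i
  define q where "q i = normal_density 0 (sg i)" for i
  have pm: "p i \<in> borel_measurable borel" for i by (simp add: p_def)
  have qm: "q i \<in> borel_measurable borel" for i by (simp add: q_def)
  have p0: "0 \<le> p i x" for i x by (simp add: p_def)
  have q0: "0 \<le> q i x" for i x by (simp add: q_def)
  have pps: "prob_space (density lborel (p i))" for i unfolding p_def using sf0[of i] by (rule prob_space_normal_density)
  have qps: "prob_space (density lborel (q i))" for i unfolding q_def using sg0[of i] by (rule prob_space_normal_density)
  define \<mu> where "\<mu> = PiM I (\<lambda>_. lborel :: real measure)"
  define N where "N = PiM {0..n} (\<lambda>_. borel :: real measure)"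
  define T where "T = (\<lambda>x::nat \<Rightarrow> real. \<lambda>i\<in>{0..n}. S0 + (\<Sum>j\<in>{1..i}. x j))"
  define P where "P x = (\<Prod>i\<in>I. p i (x i))" for x
  define Q where "Q x = (\<Prod>i\<in>I. q i (x i))" for x
  have lawf: "obs_law f S0 n = distr (density \<mu> P) N T"
  proof -
    have "PiM {1..n} (\<lambda>i. density lborel (normal_density 0 (sqrt (incr_var f n i)))) = PiM I (\<lambda>i. density lborel (p i))"
      by (rule PiM_cong) (auto simp: I_def p_def sf_def vf_def)
    also have "\<dots> = density \<mu> P" unfolding \<mu>_def P_def by (rule PiM_density_prod[OF fin pm p0 pps])
    finally show ?thesis unfolding obs_law_def N_def T_def by simp
  qed
  have lawg: "obs_law g S0 n = distr (density \<mu> Q) N T"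
  proof -
    have "PiM {1..n} (\<lambda>i. density lborel (normal_density 0 (sqrt (incr_var g n i)))) = PiM I (\<lambda>i. density lborel (q i))"
      by (rule PiM_cong) (auto simp: I_def q_def sg_def vg_def)
    also have "\<dots> = density \<mu> Q" unfolding \<mu>_def Q_def by (rule PiM_density_prod[OF fin qm q0 qps])
    finally show ?thesis unfolding obs_law_def N_def T_def by simp
  qed
  have comp: "(\<lambda>x. h (x i)) \<in> borel_measurable \<mu>" if "i \<in> I" "h \<in> borel_measurable borel" for i and h :: "real \<Rightarrow> real"
    unfolding \<mu>_def using that
    by (intro measurable_compose[OF measurable_component_singleton[of i I "\<lambda>_. lborel"]]) auto
  have Pm: "P \<in> borel_measurable \<mu>" unfolding P_def by (intro borel_measurable_prod comp pm)
  have Qm: "Q \<in> borel_measurable \<mu>" unfolding Q_def by (intro borel_measurable_prod comp qm)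
  have P0: "0 \<le> P x" for x unfolding P_def by (intro prod_nonneg) (simp add: p0)
  have Q0: "0 \<le> Q x" for x unfolding Q_def by (intro prod_nonneg) (simp add: q0)
  have Pi: "(\<integral>\<^sup>+x. ennreal (P x) \<partial>\<mu>) = 1"
    unfolding P_def \<mu>_def by (simp only: nn_prod_lborel[OF fin pm p0]) (simp add: p_def nd_nn1[OF sf0])
  have Qi: "(\<integral>\<^sup>+x. ennreal (Q x) \<partial>\<mu>) = 1"
    unfolding Q_def \<mu>_def by (simp only: nn_prod_lborel[OF fin qm q0]) (simp add: q_def nd_nn1[OF sg0])
  define \<kappa> where "\<kappa> i = 2 * sf i * sg i/((sf i)^2+(sg i)^2)" for i
  define \<rho> where "\<rho> = (\<Prod>i\<in>I. sqrt (\<kappa> i))"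
  have kb: "exp (-(\<delta>^2/2)) \<le> \<kappa> i \<and> \<kappa> i \<le> 1" if i: "i \<in> I" for i
  proof -
    have "i \<in> {1..n}" using i by (simp add: I_def)
    note il = iv_le[OF n this fm gm fb gb db] iv_le[OF n this gm fm gb fb db']
    have h1: "(sg i)^2 \<le> exp \<delta> * (sf i)^2" using il(1) vf0[of i] vg0[of i] i by (simp add: sf_def sg_def vf_def vg_def)
    have h2: "(sf i)^2 \<le> exp \<delta> * (sg i)^2" using il(2) vf0[of i] vg0[of i] i by (simp add: sf_def sg_def vf_def vg_def)
    show ?thesis unfolding \<kappa>_def using kappa_bound[OF sf0 sg0 d0 h1 h2] by simp
  qed
  have k0: "0 \<le> \<kappa> i" for i unfolding \<kappa>_def using sf0[of i] sg0[of i] by simp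
  have r0: "0 \<le> \<rho>" unfolding \<rho>_def by (intro prod_nonneg) (simp add: k0)
  have r1: "\<rho> \<le> 1" unfolding \<rho>_def by (intro prod_le_1) (use kb k0 in auto)
  have rsq: "\<rho>^2 = (\<Prod>i\<in>I. \<kappa> i)" unfolding \<rho>_def prod_power_distrib using k0 by simp
  have "exp (-(real n * \<delta>^2/2)) = (\<Prod>i\<in>I. exp (-(\<delta>^2/2)))"
    using cardI exp_of_nat_mult[of n "-(\<delta>^2/2)"] by simp
  also have "\<dots> \<le> (\<Prod>i\<in>I. \<kappa> i)" by (intro prod_mono) (use kb in auto)
  finally have rlow: "exp (-(real n * \<delta>^2/2)) \<le> \<rho>^2" using rsq by simp
  have Ri: "(\<integral>\<^sup>+x. ennreal (sqrt (P x * Q x)) \<partial>\<mu>) = ennreal \<rho>"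
  proof -
    have "(\<integral>\<^sup>+x. ennreal (sqrt (P x * Q x)) \<partial>\<mu>) = (\<integral>\<^sup>+x. ennreal (\<Prod>i\<in>I. sqrt (p i (x i) * q i (x i))) \<partial>\<mu>)"
      unfolding P_def Q_def prod.distrib[symmetric] sqrt_prod[OF fin] ..
    also have "\<dots> = (\<Prod>i\<in>I. \<integral>\<^sup>+y. ennreal (sqrt (p i y * q i y)) \<partial>lborel)"
      unfolding \<mu>_def by (rule nn_prod_lborel[OF fin]) (simp_all add: p_def q_def)
    also have "\<dots> = (\<Prod>i\<in>I. ennreal (sqrt (\<kappa> i)))"
      unfolding p_def q_def \<kappa>_def by (rule prod.cong[OF refl], rule gauss_aff[OF sf0 sg0])
    also have "\<dots> = ennreal \<rho>" unfolding \<rho>_def by (rule prod_ennreal) (simp add: k0)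
    finally show ?thesis .
  qed
  have Tm: "T \<in> measurable \<mu> N"
    unfolding T_def N_def
  proof (rule measurable_restrict)
    fix i assume i: "i \<in> {0..n}"
    have "(\<lambda>x. x j) \<in> borel_measurable \<mu>" if "j \<in> {1..i}" for j
      using comp[of j "\<lambda>y. y"] that i by (auto simp: I_def)
    hence "(\<lambda>x. \<Sum>j\<in>{1..i}. x j) \<in> borel_measurable \<mu>" by (intro borel_measurable_sum) auto
    thus "(\<lambda>x. S0 + (\<Sum>j\<in>{1..i}. x j)) \<in> borel_measurable \<mu>" by simp
  qed
  have "tv_norm (obs_law f S0 n) (obs_law g S0 n) \<le> 2 * sqrt (1 - \<rho>^2)"
    unfolding lawf lawg by (rule tv_distr[OF Pm Qm P0 Q0 Pi Qi Ri r0 r1 Tm])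
  thus ?thesis using r0 r1 rlow unfolding \<delta>_def by blast
qed
lemma sqrt_one_minus: "0 \<le> a \<Longrightarrow> a \<le> 1 \<Longrightarrow> sqrt (1 - a) \<le> 1 - a/2"
proof -
  assume a: "0 \<le> a" "a \<le> 1"
  have "1 - a \<le> (1 - a/2)^2" by (simp add: power2_eq_square algebra_simps)
  hence "sqrt (1 - a) \<le> sqrt ((1 - a/2)^2)" by (rule real_sqrt_le_mono)
  thus ?thesis using a by simp
qed

lemma final_bounds:
  fixes TV \<rho> \<delta> F G :: real and n :: nat
  assumes r0: "0 \<le> \<rho>" and r1: "\<rho> \<le> 1" and rl: "exp (-(real n * \<delta>^2/2)) \<le> \<rho>^2"
    and tv: "TV \<le> 2 * sqrt (1 - \<rho>^2)" and F0: "0 \<le> F" and G0: "0 \<le> G" and d0: "0 \<le> \<delta>"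
  shows "TV \<le> 2 * sqrt (real n) * exp (2 * (F + G)) * \<delta>"
    and "1 - TV / 2 \<ge> exp (-((real n * exp (3 * F + 3 * G) * \<delta>^2)/2)) / 2"
proof -
  have a: "1 - \<rho>^2 \<le> real n * \<delta>^2/2"
    using rl exp_ge_add_one_self[of "-(real n * \<delta>^2/2)"] by linarith
  have "sqrt (1 - \<rho>^2) \<le> sqrt (real n * \<delta>^2)"
  proof (rule real_sqrt_le_mono)
    have "0 \<le> real n * \<delta>^2" by simp
    thus "1 - \<rho>^2 \<le> real n * \<delta>^2" using a by linarith
  qed
  also have "\<dots> = sqrt (real n) * \<delta>" using d0 by (simp add: real_sqrt_mult)
  finally have b: "TV \<le> 2 * (sqrt (real n) * \<delta>)" using tv by linarith
  have "1 \<le> exp (2 * (F + G))" using F0 G0 by simp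
  hence "sqrt (real n) * \<delta> * 1 \<le> sqrt (real n) * \<delta> * exp (2 * (F + G))"
    by (rule mult_left_mono) (use d0 in simp)
  thus "TV \<le> 2 * sqrt (real n) * exp (2 * (F + G)) * \<delta>" using b by (simp add: mult_ac)
  have r2: "0 \<le> \<rho>^2" "\<rho>^2 \<le> 1" using r0 r1 by (auto simp: power_le_one)
  have c: "1 - TV/2 \<ge> \<rho>^2/2" using sqrt_one_minus[OF r2] tv by linarith
  have "1 \<le> exp (3 * F + 3 * G)" using F0 G0 by simp
  hence "real n * \<delta>^2 * 1 \<le> real n * \<delta>^2 * exp (3 * F + 3 * G)"
    by (rule mult_left_mono) simp
  hence "exp (-((real n * exp (3 * F + 3 * G) * \<delta>^2)/2)) \<le> exp (-(real n * \<delta>^2/2))"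
    by (simp add: mult_ac)
  thus "1 - TV / 2 \<ge> exp (-((real n * exp (3 * F + 3 * G) * \<delta>^2)/2)) / 2" using rl c by linarith
qed

theorem proposition8:
  "\<exists>(c0::real) (R::real \<Rightarrow> real).
     c0 > 0 \<and> (\<forall>x\<ge>0. R x > 0) \<and> (\<forall>x y. 0 \<le> x \<and> x \<le> y \<longrightarrow> R y \<le> R x) \<and>
     (\<forall>(n::nat) (f::real \<Rightarrow> real) (g::real \<Rightarrow> real) (S0::real).
        n \<ge> 1 \<and> f \<in> borel_measurable borel \<and> g \<in> borel_measurable borel \<and>
        bounded (f ` {0..1}) \<and> bounded (g ` {0..1}) \<longrightarrow>
        tv_norm (obs_law f S0 n) (obs_law g S0 n)
          \<le> c0 * sqrt (real n) * exp (c0 * (sup_norm f + sup_norm g)) * sup_norm (\<lambda>t. f t - g t)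
        \<and> 1 - tv_norm (obs_law f S0 n) (obs_law g S0 n) / 2
          \<ge> R (real n * exp (3 * sup_norm f + 3 * sup_norm g) * (sup_norm (\<lambda>t. f t - g t))\<^sup>2))"
proof -
  define R :: "real \<Rightarrow> real" where "R = (\<lambda>x. exp (-(x/2)) / 2)"
  have Rpos: "\<forall>x\<ge>0. R x > 0" by (simp add: R_def)
  have Rmono: "\<forall>x y. 0 \<le> x \<and> x \<le> y \<longrightarrow> R y \<le> R x" by (simp add: R_def)
  have main: "\<forall>(n::nat) (f::real \<Rightarrow> real) (g::real \<Rightarrow> real) (S0::real).
        n \<ge> 1 \<and> f \<in> borel_measurable borel \<and> g \<in> borel_measurable borel \<and>
        bounded (f ` {0..1}) \<and> bounded (g ` {0..1}) \<longrightarrow>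
        tv_norm (obs_law f S0 n) (obs_law g S0 n)
          \<le> 2 * sqrt (real n) * exp (2 * (sup_norm f + sup_norm g)) * sup_norm (\<lambda>t. f t - g t)
        \<and> 1 - tv_norm (obs_law f S0 n) (obs_law g S0 n) / 2
          \<ge> R (real n * exp (3 * sup_norm f + 3 * sup_norm g) * (sup_norm (\<lambda>t. f t - g t))\<^sup>2)"
  proof (intro allI impI)
    fix n :: nat and f g :: "real \<Rightarrow> real" and S0 :: real
    assume H: "n \<ge> 1 \<and> f \<in> borel_measurable borel \<and> g \<in> borel_measurable borel \<and>
        bounded (f ` {0..1}) \<and> bounded (g ` {0..1})"
    hence n: "n \<ge> 1" and fm: "f \<in> borel_measurable borel" and gm: "g \<in> borel_measurable borel"
      and fbd: "bounded (f ` {0..1})" and gbd: "bounded (g ` {0..1})" by auto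
    obtain \<rho> where r0: "0 \<le> \<rho>" and r1: "\<rho> \<le> 1"
      and rl: "exp (-(real n * (sup_norm (\<lambda>t. f t - g t))^2/2)) \<le> \<rho>^2"
      and tv: "tv_norm (obs_law f S0 n) (obs_law g S0 n) \<le> 2 * sqrt (1 - \<rho>^2)"
      using main_rho[OF n fm gm fbd gbd, of S0] by blast
    have F0: "0 \<le> sup_norm f" by (rule sn_nonneg[OF fbd])
    have G0: "0 \<le> sup_norm g" by (rule sn_nonneg[OF gbd])
    have d0: "0 \<le> sup_norm (\<lambda>t. f t - g t)" by (rule sn_nonneg[OF bounded_diff01[OF fbd gbd]])
    note fb = final_bounds[OF r0 r1 rl tv F0 G0 d0]
    show "tv_norm (obs_law f S0 n) (obs_law g S0 n)
          \<le> 2 * sqrt (real n) * exp (2 * (sup_norm f + sup_norm g)) * sup_norm (\<lambda>t. f t - g t)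
        \<and> 1 - tv_norm (obs_law f S0 n) (obs_law g S0 n) / 2
          \<ge> R (real n * exp (3 * sup_norm f + 3 * sup_norm g) * (sup_norm (\<lambda>t. f t - g t))\<^sup>2)"
      using fb unfolding R_def by simp
  qed
  show ?thesis
    by (rule exI[of _ "2::real"], rule exI[of _ R]) (use Rpos Rmono main in simp)
qed
end
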